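(* Let $q\ge0$, let $(\varepsilon_t)_{t\in\mathbb Z}$ be i.i.d. real random variables with a continuous distribution, and let $X_t=\sum_{l=0}^q\varepsilon_{t-l}$ (MA($q$) process with equal weights). For OPs of length $m=2$, the long-run covariance matrix is $$\Sigma=\frac1{12}\begin{pmatrix}1&-1\\-1&1\end{pmatrix},$$ independently of $q$ and of the distribution of $\varepsilon_t$.
   Context: For $m=2$ the OPs are $\pi_1=(1,2)$ (i.e. $X_t<X_{t+1}$) and $\pi_2=(2,1)$ (i.e. $X_t>X_{t+1}$); $\Pi_t$ is the OP of $(X_t,X_{t+1})$, $p_i=\mathbb P(\Pi_0=\pi_i)$, $p_{ij}(k)=\mathbb P(\Pi_0=\pi_i,\Pi_k=\pi_j)$, and the long-run covariance matrix is $\Sigma=(\sigma_{ij})$ with $\sigma_{ij}=p_i(\delta_{ij}-p_j)+\sum_{k=1}^\infty\big(p_{ij}(k)+p_{ji}(k)-2p_ip_j\big)$, $\delta_{ij}$ the Kronecker delta. *)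

theory Defs
  imports "HOL-Probability.Probability"
begin

text \<open>Ordinal pattern of length m = 2 of (X t, X (t+1)):
  1 encodes pi_1 = (1,2), i.e. X t < X (t+1); 2 encodes pi_2 = (2,1), i.e. X t > X (t+1).
  Ties (probability zero under the hypotheses) are given the code 0, which is neither pattern.\<close>
definition op2 :: "(int \<Rightarrow> 'a \<Rightarrow> real) \<Rightarrow> int \<Rightarrow> 'a \<Rightarrow> nat" where
  "op2 X t \<omega> = (if X t \<omega> < X (t + 1) \<omega> then 1
                 else if X t \<omega> > X (t + 1) \<omega> then 2 else 0)"

definition op_prob :: "'a measure \<Rightarrow> (int \<Rightarrow> 'a \<Rightarrow> real) \<Rightarrow> nat \<Rightarrow> real" where
  "op_prob M X i = measure M {\<omega> \<in> space M. op2 X 0 \<omega> = i}"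

definition op_joint :: "'a measure \<Rightarrow> (int \<Rightarrow> 'a \<Rightarrow> real) \<Rightarrow> nat \<Rightarrow> nat \<Rightarrow> nat \<Rightarrow> real" where
  "op_joint M X i j k = measure M {\<omega> \<in> space M. op2 X 0 \<omega> = i \<and> op2 X (int k) \<omega> = j}"

text \<open>Summand (for k = 1, 2, ...) of the long-run covariance series; indexed from 0 via k+1.\<close>
definition lrcov_term :: "'a measure \<Rightarrow> (int \<Rightarrow> 'a \<Rightarrow> real) \<Rightarrow> nat \<Rightarrow> nat \<Rightarrow> nat \<Rightarrow> real" where
  "lrcov_term M X i j k = op_joint M X i j (Suc k) + op_joint M X j i (Suc k)
                          - 2 * op_prob M X i * op_prob M X j"

definition lrcov :: "'a measure \<Rightarrow> (int \<Rightarrow> 'a \<Rightarrow> real) \<Rightarrow> nat \<Rightarrow> nat \<Rightarrow> real" where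
  "lrcov M X i j = op_prob M X i * ((if i = j then 1 else 0) - op_prob M X j)
                   + (\<Sum>k. lrcov_term M X i j k)"

end

theory Submission
  imports Defs
begin

lemma (in prob_space) indep_sets_reindex_inj:
  assumes "indep_sets F (g ` I)" "inj_on g I"
  shows "indep_sets (\<lambda>i. F (g i)) I"
  unfolding indep_sets_def
proof (intro conjI ballI allI impI)
  fix i assume "i \<in> I" then show "F (g i) \<subseteq> events" using assms(1) by (auto simp: indep_sets_def)
next
  fix J A assume J: "J \<subseteq> I" "J \<noteq> {}" "finite J" and A: "A \<in> Pi J (\<lambda>i. F (g i))"
  define B where "B = (\<lambda>y. A (the_inv_into J g y))"
  have inj: "inj_on g J" using assms(2) J inj_on_subset by blast
  have Bg: "\<And>j. j\<in>J \<Longrightarrow> B (g j) = A j" using the_inv_into_f_f[OF inj] by (simp add: B_def)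
  have "prob (\<Inter>j\<in>g`J. B j) = (\<Prod>j\<in>g`J. prob (B j))"
    using assms(1) by (rule indep_setsD) (use J A Bg in auto)
  moreover have "(\<Inter>j\<in>g`J. B j) = (\<Inter>j\<in>J. A j)" using Bg by auto
  moreover have "(\<Prod>j\<in>g`J. prob (B j)) = (\<Prod>j\<in>J. prob (A j))" by (simp add: prod.reindex[OF inj] Bg)
  ultimately show "prob (\<Inter>j\<in>J. A j) = (\<Prod>j\<in>J. prob (A j))" by simp
qed

lemma (in prob_space) indep_vars_reindex_inj:
  assumes "indep_vars M' X K" "inj_on g I" "g ` I \<subseteq> K"
  shows "indep_vars (\<lambda>i. M' (g i)) (\<lambda>i. X (g i)) I"
proof -
  have "indep_sets (\<lambda>i. sigma_sets (space M) { X i -` A \<inter> space M | A. A \<in> sets (M' i)}) (g ` I)"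
    using assms(1,3) unfolding indep_vars_def by (auto intro: indep_sets_mono_index)
  from indep_sets_reindex_inj[OF this assms(2)] show ?thesis
    using assms(1,3) unfolding indep_vars_def by auto
qed

lemma (in prob_space) integral_sum_list_ind:
  "set Es \<subseteq> events \<Longrightarrow> integrable M (\<lambda>\<omega>. \<Sum>E\<leftarrow>Es. indicator E \<omega> :: real) \<and>
     integral\<^sup>L M (\<lambda>\<omega>. \<Sum>E\<leftarrow>Es. indicator E \<omega> :: real) = (\<Sum>E\<leftarrow>Es. prob E)"
proof (induction Es)
  case Nil then show ?case by simp
next
  case (Cons E Es)
  then have E: "E \<in> events" and IH: "integrable M (\<lambda>\<omega>. \<Sum>E\<leftarrow>Es. indicator E \<omega> :: real)"
    "integral\<^sup>L M (\<lambda>\<omega>. \<Sum>E\<leftarrow>Es. indicator E \<omega> :: real) = (\<Sum>E\<leftarrow>Es. prob E)" by auto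
  have iE: "integrable M (indicator E :: 'a \<Rightarrow> real)" using E by (intro integrable_real_indicator) (auto simp: emeasure_eq_measure)
  show ?case using IH iE E
    by (simp add: Bochner_Integration.integral_add  Int_absorb2)
qed

lemma (in prob_space) sum_prob_AE:
  assumes "set Es \<subseteq> events" "set Fs \<subseteq> events"
    "AE \<omega> in M. (\<Sum>E\<leftarrow>Es. indicator E \<omega>) = (\<Sum>F\<leftarrow>Fs. indicator F \<omega> :: real)"
  shows "(\<Sum>E\<leftarrow>Es. prob E) = (\<Sum>F\<leftarrow>Fs. prob F)"
proof -
  note a = integral_sum_list_ind[OF assms(1)] and b = integral_sum_list_ind[OF assms(2)]
  have "integral\<^sup>L M (\<lambda>\<omega>. \<Sum>E\<leftarrow>Es. indicator E \<omega> :: real) = integral\<^sup>L M (\<lambda>\<omega>. \<Sum>F\<leftarrow>Fs. indicator F \<omega> :: real)"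
    using a b assms(3) by (intro integral_cong_AE) auto
  then show ?thesis using a b by simp
qed

locale iidc = prob_space M for M :: "'a measure" +
  fixes \<epsilon> :: "int \<Rightarrow> 'a \<Rightarrow> real"
  assumes meas[measurable]: "\<And>t. \<epsilon> t \<in> borel_measurable M"
  and ind: "indep_vars (\<lambda>_. borel) \<epsilon> UNIV"
  and ident: "\<And>t. distr M borel (\<epsilon> t) = distr M borel (\<epsilon> 0)"
  and noatom: "\<And>x. measure M {\<omega>\<in>space M. \<epsilon> 0 \<omega> = x} = 0"
begin

definition lt :: "int \<Rightarrow> int \<Rightarrow> 'a set" where
  "lt a b = {\<omega>\<in>space M. \<epsilon> a \<omega> < \<epsilon> b \<omega>}"

lemma lt_sets[measurable]: "lt a b \<in> events"
  unfolding lt_def by measurable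

lemma distr_tuple:
  assumes "inj_on g {..<n}" "n > 0"
  shows "distr M (PiM {..<n} (\<lambda>_. borel)) (\<lambda>\<omega>. \<lambda>i\<in>{..<n}. \<epsilon> (g i) \<omega>)
         = PiM {..<n} (\<lambda>_. distr M borel (\<epsilon> 0))"
proof -
  have "indep_vars (\<lambda>_. borel) (\<lambda>i. \<epsilon> (g i)) {..<n}"
    using indep_vars_reindex_inj[OF ind assms(1)] by simp
  moreover have ne: "{..<n} \<noteq> {}" using assms(2) by auto
  moreover have rv: "\<And>i. random_variable borel (\<epsilon> (g i))" by simp
  ultimately have "distr M (PiM {..<n} (\<lambda>_. borel)) (\<lambda>\<omega>. \<lambda>i\<in>{..<n}. \<epsilon> (g i) \<omega>)
      = PiM {..<n} (\<lambda>i. distr M borel (\<epsilon> (g i)))"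
    using indep_vars_iff_distr_eq_PiM[where I="{..<n}" and M'="\<lambda>_. borel" and X="\<lambda>i. \<epsilon> (g i)"]
    by blast
  also have "\<dots> = PiM {..<n} (\<lambda>_. distr M borel (\<epsilon> 0))" by (intro PiM_cong refl ident)
  finally show ?thesis .
qed

lemma prob_sym:
  assumes "inj_on g {..<n}" "inj_on h {..<n}" "n > 0"
    "{f\<in>space (PiM {..<n} (\<lambda>_. borel)). P f} \<in> sets (PiM {..<n} (\<lambda>_. borel :: real measure))"
  shows "prob {\<omega>\<in>space M. P (\<lambda>i\<in>{..<n}. \<epsilon> (g i) \<omega>)} = prob {\<omega>\<in>space M. P (\<lambda>i\<in>{..<n}. \<epsilon> (h i) \<omega>)}"
proof -
  let ?S = "{f\<in>space (PiM {..<n} (\<lambda>_. borel)). P f}"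
  have *: "prob {\<omega>\<in>space M. P (\<lambda>i\<in>{..<n}. \<epsilon> (g i) \<omega>)} = measure (PiM {..<n} (\<lambda>_. distr M borel (\<epsilon> 0))) ?S"
    if "inj_on g {..<n}" for g
  proof -
    have m: "(\<lambda>\<omega>. \<lambda>i\<in>{..<n}. \<epsilon> (g i) \<omega>) \<in> measurable M (PiM {..<n} (\<lambda>_. borel))"
      by measurable
    have "{\<omega>\<in>space M. P (\<lambda>i\<in>{..<n}. \<epsilon> (g i) \<omega>)} = (\<lambda>\<omega>. \<lambda>i\<in>{..<n}. \<epsilon> (g i) \<omega>) -` ?S \<inter> space M"
      by (auto simp: space_PiM)
    then show ?thesis using measure_distr[OF m assms(4)] distr_tuple[OF that assms(3)] by simp
  qed
  show ?thesis using *[OF assms(1)] *[OF assms(2)] by simp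
qed

lemma tie_null:
  assumes "a \<noteq> b"
  shows "prob {\<omega>\<in>space M. \<epsilon> a \<omega> = \<epsilon> b \<omega>} = 0"
proof -
  define \<mu> where "\<mu> = distr M borel (\<epsilon> 0)"
  interpret mu: prob_space \<mu> unfolding \<mu>_def by (rule prob_space_distr) simp
  interpret pm: pair_sigma_finite \<mu> \<mu> by unfold_locales
  define g where "g = (\<lambda>x::bool. if x then a else b)"
  have "inj_on g UNIV" using assms unfolding g_def inj_on_def by auto
  from indep_vars_reindex_inj[OF ind this] have "indep_vars (\<lambda>_. borel) (\<lambda>i. \<epsilon> (g i)) UNIV" by simp
  then have iv: "indep_var borel (\<epsilon> a) borel (\<epsilon> b)"
    unfolding indep_var_def
    by (rule indep_vars_cong[THEN iffD1, rotated -1]) (auto simp: g_def split: bool.split)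
  then have d: "distr M (borel \<Otimes>\<^sub>M borel) (\<lambda>x. (\<epsilon> a x, \<epsilon> b x)) = \<mu> \<Otimes>\<^sub>M \<mu>"
    unfolding indep_var_distribution_eq \<mu>_def using ident by metis
  let ?D = "{p::real\<times>real\<in>space (borel \<Otimes>\<^sub>M borel). fst p = snd p}"
  have Dm: "?D \<in> sets (borel \<Otimes>\<^sub>M borel)" by measurable
  have m: "(\<lambda>x. (\<epsilon> a x, \<epsilon> b x)) \<in> measurable M (borel \<Otimes>\<^sub>M borel)" by measurable
  have P1: "prob {\<omega>\<in>space M. \<epsilon> a \<omega> = \<epsilon> b \<omega>} = measure (\<mu> \<Otimes>\<^sub>M \<mu>) ?D"
    using measure_distr[OF m Dm] d by (simp add: vimage_def space_pair_measure Int_def conj_commute)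
  have "emeasure (\<mu> \<Otimes>\<^sub>M \<mu>) ?D = (\<integral>\<^sup>+x. emeasure \<mu> (Pair x -` ?D) \<partial>\<mu>)"
    proof -
    have "sets (\<mu> \<Otimes>\<^sub>M \<mu>) = sets (borel \<Otimes>\<^sub>M borel)"
      by (rule sets_pair_measure_cong) (simp_all add: \<mu>_def)
    then show ?thesis using Dm by (intro mu.emeasure_pair_measure_alt) simp
  qed
  also have "\<dots> = (\<integral>\<^sup>+x. 0 \<partial>\<mu>)"
  proof (rule nn_integral_cong)
    fix x
    have "Pair x -` ?D = {x}" by (auto simp: space_pair_measure)
    moreover have "emeasure \<mu> {x} = 0"
    proof -
      have "measure \<mu> {x} = measure M {\<omega>\<in>space M. \<epsilon> 0 \<omega> = x}"
        unfolding \<mu>_def by (subst measure_distr) (auto intro!: arg_cong[where f="measure M"])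
      then show ?thesis using noatom mu.emeasure_eq_measure by simp
    qed
    ultimately show "emeasure \<mu> (Pair x -` ?D) = 0" by simp
  qed
  finally have "emeasure (\<mu> \<Otimes>\<^sub>M \<mu>) ?D = 0" by simp
  then show ?thesis using P1 by (simp add: measure_def)
qed

end
context iidc begin

lemma ae_neq:
  assumes "a \<noteq> b" shows "AE \<omega> in M. \<epsilon> a \<omega> \<noteq> \<epsilon> b \<omega>"
proof -
  have "{\<omega>\<in>space M. \<epsilon> a \<omega> = \<epsilon> b \<omega>} \<in> null_sets M"
    using tie_null[OF assms] by (auto simp: null_sets_def emeasure_eq_measure)
  from AE_not_in[OF this] AE_space show ?thesis by eventually_elim auto
qed

lemma ae_neq': "AE \<omega> in M. a \<noteq> b \<longrightarrow> \<epsilon> a \<omega> \<noteq> \<epsilon> b \<omega>"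
  by (cases "a = b") (auto intro: ae_neq)

lemma prob_sym_list:
  assumes "distinct xs" "distinct ys" "length xs = n" "length ys = n" "n > 0"
    "{f\<in>space (PiM {..<n} (\<lambda>_. borel)). P f} \<in> sets (PiM {..<n} (\<lambda>_. borel :: real measure))"
  shows "prob {\<omega>\<in>space M. P (\<lambda>i\<in>{..<n}. \<epsilon> (xs!i) \<omega>)} = prob {\<omega>\<in>space M. P (\<lambda>i\<in>{..<n}. \<epsilon> (ys!i) \<omega>)}"
proof (rule prob_sym[OF _ _ assms(5,6)])
  show "inj_on (\<lambda>i. xs ! i) {..<n}" using assms(1,3) by (auto simp: inj_on_def distinct_conv_nth)
  show "inj_on (\<lambda>i. ys ! i) {..<n}" using assms(2,4) by (auto simp: inj_on_def distinct_conv_nth)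
qed

lemma half:
  assumes "a \<noteq> b" shows "prob (lt a b) = 1/2"
proof -
  have S: "{f\<in>space (PiM {..<2} (\<lambda>_. borel)). f 0 < f 1} \<in> sets (PiM {..<2::nat} (\<lambda>_. borel :: real measure))"
    by measurable
  have "prob (lt a b) = prob (lt b a)"
    using prob_sym_list[OF _ _ _ _ _ S, of "[a,b]" "[b,a]"] assms by (simp add: lt_def)
  moreover have "AE \<omega> in M. indicator (lt a b) \<omega> + indicator (lt b a) \<omega> = (1::real)"
    using ae_neq[OF assms] AE_space by eventually_elim (auto simp: lt_def indicator_def)
  then have "prob (lt a b) + prob (lt b a) = prob (space M)"
    using sum_prob_AE[of "[lt a b, lt b a]" "[space M]"] by simp
  ultimately show ?thesis by (simp add: prob_space)
qed

lemma quarter_sym: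
  assumes "distinct [a,b,c,d]" "distinct [a',b',c',d']"
  shows "prob (lt a b \<inter> lt c d) = prob (lt a' b' \<inter> lt c' d')"
proof -
  have S: "{f\<in>space (PiM {..<4} (\<lambda>_. borel)). f 0 < f 1 \<and> f 2 < f 3} \<in> sets (PiM {..<4::nat} (\<lambda>_. borel :: real measure))"
    by measurable
  have e: "lt a b \<inter> lt c d = {\<omega>\<in>space M. \<epsilon> a \<omega> < \<epsilon> b \<omega> \<and> \<epsilon> c \<omega> < \<epsilon> d \<omega>}" for a b c d
    by (auto simp: lt_def)
  show ?thesis unfolding e
    using prob_sym_list[OF assms _ _ _ S] by simp
qed

lemma quarter:
  assumes "distinct [a,b,c,d]" shows "prob (lt a b \<inter> lt c d) = 1/4"
proof -
  have d: "distinct [b,a,c,d]" "distinct [a,b,d,c]" "distinct [b,a,d,c]" using assms by auto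
  have "AE \<omega> in M. indicator (lt a b \<inter> lt c d) \<omega> + indicator (lt b a \<inter> lt c d) \<omega>
     + indicator (lt a b \<inter> lt d c) \<omega> + indicator (lt b a \<inter> lt d c) \<omega> = (1::real)"
    using ae_neq'[of a b] ae_neq'[of c d] AE_space
    by eventually_elim (use assms in \<open>auto simp: lt_def indicator_def\<close>)
  then have "prob (lt a b \<inter> lt c d) + prob (lt b a \<inter> lt c d) + prob (lt a b \<inter> lt d c)
       + prob (lt b a \<inter> lt d c) = prob (space M)"
    using sum_prob_AE[of "[lt a b \<inter> lt c d, lt b a \<inter> lt c d, lt a b \<inter> lt d c, lt b a \<inter> lt d c]" "[space M]"]
    by (simp add: add.assoc)
  then show ?thesis using quarter_sym[OF assms d(1)] quarter_sym[OF assms d(2)] quarter_sym[OF assms d(3)]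
    by (simp add: prob_space)
qed

definition mx :: "int \<Rightarrow> int \<Rightarrow> int \<Rightarrow> 'a set" where
  "mx a b c = lt b a \<inter> lt c a"
definition mn :: "int \<Rightarrow> int \<Rightarrow> int \<Rightarrow> 'a set" where
  "mn a b c = lt a b \<inter> lt a c"

lemma third_sym:
  assumes "distinct [a,b,c]" "distinct [a',b',c']"
  shows "prob (mx a b c) = prob (mx a' b' c')" "prob (mn a b c) = prob (mn a' b' c')"
proof -
  have S: "{f\<in>space (PiM {..<3} (\<lambda>_. borel)). f 1 < f 0 \<and> f 2 < f 0} \<in> sets (PiM {..<3::nat} (\<lambda>_. borel :: real measure))"
    by measurable
  have S': "{f\<in>space (PiM {..<3} (\<lambda>_. borel)). f 0 < f 1 \<and> f 0 < f 2} \<in> sets (PiM {..<3::nat} (\<lambda>_. borel :: real measure))"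
    by measurable
  have e: "mx a b c = {\<omega>\<in>space M. \<epsilon> b \<omega> < \<epsilon> a \<omega> \<and> \<epsilon> c \<omega> < \<epsilon> a \<omega>}"
     "mn a b c = {\<omega>\<in>space M. \<epsilon> a \<omega> < \<epsilon> b \<omega> \<and> \<epsilon> a \<omega> < \<epsilon> c \<omega>}" for a b c
    by (auto simp: lt_def mx_def mn_def)
  show "prob (mx a b c) = prob (mx a' b' c')" unfolding e
    using prob_sym_list[OF assms _ _ _ S] by simp
  show "prob (mn a b c) = prob (mn a' b' c')" unfolding e
    using prob_sym_list[OF assms _ _ _ S'] by simp
qed

lemma third:
  assumes "distinct [a,b,c]" shows "prob (mx a b c) = 1/3" "prob (mn a b c) = 1/3"
proof -
  have d: "distinct [b,a,c]" "distinct [c,a,b]" using assms by auto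
  have "AE \<omega> in M. indicator (mx a b c) \<omega> + indicator (mx b a c) \<omega> + indicator (mx c a b) \<omega> = (1::real)"
    using ae_neq'[of a b] ae_neq'[of a c] ae_neq'[of b c] AE_space
    by eventually_elim (use assms in \<open>auto simp: lt_def mx_def indicator_def\<close>)
  then have "prob (mx a b c) + prob (mx b a c) + prob (mx c a b) = prob (space M)"
    using sum_prob_AE[of "[mx a b c, mx b a c, mx c a b]" "[space M]"]
    by (simp add: add.assoc mx_def)
  then show "prob (mx a b c) = 1/3" using third_sym(1)[OF assms d(1)] third_sym(1)[OF assms d(2)]
    by (simp add: prob_space)
  have "AE \<omega> in M. indicator (mn a b c) \<omega> + indicator (mn b a c) \<omega> + indicator (mn c a b) \<omega> = (1::real)"
    using ae_neq'[of a b] ae_neq'[of a c] ae_neq'[of b c] AE_space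
    by eventually_elim (use assms in \<open>auto simp: lt_def mn_def indicator_def\<close>)
  then have "prob (mn a b c) + prob (mn b a c) + prob (mn c a b) = prob (space M)"
    using sum_prob_AE[of "[mn a b c, mn b a c, mn c a b]" "[space M]"]
    by (simp add: add.assoc mn_def)
  then show "prob (mn a b c) = 1/3" using third_sym(2)[OF assms d(1)] third_sym(2)[OF assms d(2)]
    by (simp add: prob_space)
qed

lemma triple:
  assumes "distinct [a,b,c]"
  shows "prob (lt a b \<inter> lt b c) = 1/6" "prob (lt a b \<inter> lt c b) = 1/3"
        "prob (lt b a \<inter> lt b c) = 1/3" "prob (lt b a \<inter> lt c b) = 1/6"
proof -
  have d: "distinct [b,a,c]" using assms by auto
  show p12: "prob (lt a b \<inter> lt c b) = 1/3" using third(1)[OF d] by (simp add: mx_def)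
  show p21: "prob (lt b a \<inter> lt b c) = 1/3" using third(2)[OF d] by (simp add: mn_def)
  have "AE \<omega> in M. indicator (lt a b \<inter> lt b c) \<omega> + indicator (lt a b \<inter> lt c b) \<omega> = (indicator (lt a b) \<omega> :: real)"
    using ae_neq'[of b c] AE_space
    by eventually_elim (use assms in \<open>auto simp: lt_def indicator_def\<close>)
  then have "prob (lt a b \<inter> lt b c) + prob (lt a b \<inter> lt c b) = prob (lt a b)"
    using sum_prob_AE[of "[lt a b \<inter> lt b c, lt a b \<inter> lt c b]" "[lt a b]"] by simp
  then show "prob (lt a b \<inter> lt b c) = 1/6" using p12 half[of a b] assms by simp
  have "AE \<omega> in M. indicator (lt b a \<inter> lt b c) \<omega> + indicator (lt b a \<inter> lt c b) \<omega> = (indicator (lt b a) \<omega> :: real)"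
    using ae_neq'[of b c] AE_space
    by eventually_elim (use assms in \<open>auto simp: lt_def indicator_def\<close>)
  then have "prob (lt b a \<inter> lt b c) + prob (lt b a \<inter> lt c b) = prob (lt b a)"
    using sum_prob_AE[of "[lt b a \<inter> lt b c, lt b a \<inter> lt c b]" "[lt b a]"] by simp
  then show "prob (lt b a \<inter> lt c b) = 1/6" using p21 half[of b a] assms by simp
qed

end

lemma telescope:
  fixes f :: "int \<Rightarrow> real"
  shows "(\<Sum>l = 0..q. f (t + 1 - int l)) - (\<Sum>l = 0..q. f (t - int l)) = f (t+1) - f (t - int q)"
proof (induction q)
  case 0 then show ?case by simp
next
  case (Suc q)
  have e: "t + 1 - int (Suc q) = t - int q" by simp
  show ?case using Suc by (simp add: sum.atLeast0_atMost_Suc e)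
qed

theorem proposition3p1:
  fixes M :: "'a measure" and \<epsilon> :: "int \<Rightarrow> 'a \<Rightarrow> real" and q :: nat
    and X :: "int \<Rightarrow> 'a \<Rightarrow> real"
  assumes "prob_space M"
    and "\<And>t. \<epsilon> t \<in> borel_measurable M"
    and "prob_space.indep_vars M (\<lambda>_. borel) \<epsilon> UNIV"
    and "\<And>t. distr M borel (\<epsilon> t) = distr M borel (\<epsilon> 0)"
    and "\<And>x. measure M {\<omega> \<in> space M. \<epsilon> 0 \<omega> = x} = 0"
    and "\<And>t \<omega>. X t \<omega> = (\<Sum>l = 0..q. \<epsilon> (t - int l) \<omega>)"
  shows "\<forall>i\<in>{1,2}. \<forall>j\<in>{1,2}.
           summable (lrcov_term M X i j) \<and>
           lrcov M X i j = (if i = j then 1 / 12 else - 1 / 12)"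
proof -
  interpret iidc M \<epsilon>
    using assms(1-5) unfolding iidc_def iidc_axioms_def by auto
  have diff: "X (t+1) \<omega> - X t \<omega> = \<epsilon> (t+1) \<omega> - \<epsilon> (t - int q) \<omega>" for t \<omega>
    using telescope[where f="\<lambda>s. \<epsilon> s \<omega>" and q=q and t=t] by (simp add: assms(6) algebra_simps)
  have op: "op2 X t \<omega> = (if \<epsilon> (t - int q) \<omega> < \<epsilon> (t+1) \<omega> then 1
             else if \<epsilon> (t+1) \<omega> < \<epsilon> (t - int q) \<omega> then 2 else 0)" for t \<omega>
    using diff[of t \<omega>] unfolding op2_def by auto
  define pat where "pat i t = (if i = (1::nat) then lt (t - int q) (t+1) else lt (t+1) (t - int q))" for i t
  have pat: "{\<omega>\<in>space M. op2 X t \<omega> = i} = pat i t" if "i \<in> {1,2}" for i t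
    using that by (auto simp: op pat_def lt_def)
  have pj: "{\<omega>\<in>space M. op2 X 0 \<omega> = i \<and> op2 X (int k) \<omega> = j} = pat i 0 \<inter> pat j (int k)"
    if "i \<in> {1,2}" "j \<in> {1,2}" for i j k
    using that by (auto simp: op pat_def lt_def)
  have p: "op_prob M X i = 1/2" if "i \<in> {1,2}" for i
    unfolding op_prob_def pat[OF that] using that half[of "- int q" 1] half[of 1 "- int q"] by (auto simp: pat_def)
  have jq: "op_joint M X i j (Suc q) = (if i = j then 1/6 else 1/3)" if "i \<in> {1,2}" "j \<in> {1,2}" for i j
  proof -
    have d: "distinct [- int q, 1, 2 + int q]" by auto
    have e1: "int (Suc q) - int q = 1" "int (Suc q) + 1 = 2 + int q" by auto
    show ?thesis unfolding op_joint_def pj[OF that]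
      using that triple[OF d] by (auto simp: pat_def e1)
  qed
  have jk: "op_joint M X i j (Suc k) = 1/4" if "i \<in> {1,2}" "j \<in> {1,2}" "k \<noteq> q" for i j k
  proof -
    have d: "distinct [- int q, 1, int (Suc k) - int q, int (Suc k) + 1]"
            "distinct [- int q, 1, int (Suc k) + 1, int (Suc k) - int q]"
            "distinct [1, - int q, int (Suc k) - int q, int (Suc k) + 1]"
            "distinct [1, - int q, int (Suc k) + 1, int (Suc k) - int q]"
      using that(3) by auto
    show ?thesis unfolding op_joint_def pj[OF that(1,2)]
      using that(1,2) quarter[OF d(1)] quarter[OF d(2)] quarter[OF d(3)] quarter[OF d(4)]
      by (auto simp: pat_def)
  qed
  have tm: "lrcov_term M X i j = (\<lambda>k. if k = q then (if i = j then - 1/6 else 1/6) else 0)"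
    if "i \<in> {1,2}" "j \<in> {1,2}" for i j
  proof
    fix k show "lrcov_term M X i j k = (if k = q then (if i = j then - 1/6 else 1/6) else 0)"
      proof (cases "k = q")
        case True then show ?thesis unfolding lrcov_term_def
          by (simp add: p[OF that(1)] p[OF that(2)] jq[OF that] jq[OF that(2,1)])
      next
        case False then show ?thesis unfolding lrcov_term_def
          by (simp add: p[OF that(1)] p[OF that(2)] jk[OF that False] jk[OF that(2,1) False])
      qed
  qed
  show ?thesis
  proof (intro ballI conjI)
    fix i j :: nat assume ij: "i \<in> {1,2}" "j \<in> {1,2}"
    have s: "lrcov_term M X i j sums (if i = j then - 1/6 else 1/6)"
      unfolding tm[OF ij] using sums_single[of q "\<lambda>_. if i = j then - 1/6 else (1/6::real)"] by simp
    then show "summable (lrcov_term M X i j)" by (rule sums_summable)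
    show "lrcov M X i j = (if i = j then 1 / 12 else - 1 / 12)"
      unfolding lrcov_def by (simp add: sums_unique[OF s, symmetric] p[OF ij(1)] p[OF ij(2)])
  qed
qed

end
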